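(* Let $f:\mathbb{R}^n\to\mathbb{R}$ be continuously differentiable and bounded below with $\nabla f$ Lipschitz continuous on $\mathbb{R}^n$, let $s$ be an integer with $0<s<n$, and let $\{\mathbf{x}^k\}$ be the sequence generated by the greedy sparse-simplex method. Then any accumulation point $\mathbf{x}^*$ of $\{\mathbf{x}^k\}$ is an $L_2(f)$-stationary point of the problem (P): minimize $f(\mathbf{x})$ subject to $\|\mathbf{x}\|_0\le s$; i.e. $\nabla_i f(\mathbf{x}^* )=0$ for $i\in I_1(\mathbf{x}^* )$ and $|\nabla_i f(\mathbf{x}^* )|\le L_2(f)M_s(\mathbf{x}^* )$ for $i\in I_0(\mathbf{x}^* )$.
   Context: $\|\mathbf{x}\|_0$ is the number of nonzero components, $C_s=\{\mathbf{x}:\|\mathbf{x}\|_0\le s\}$, $I_1(\mathbf{x})=\{i:x_i\neq0\}$, $I_0(\mathbf{x})=\{i:x_i=0\}$, $M_s(\mathbf{x})$ the $s$-th largest absolute value among components of $\mathbf{x}$, $\mathbf{e}_i$ the $i$-th standard basis vector. For $i\neq j$, $\nabla_{i,j}f(\mathbf{x})\in\mathbb{R}^2$ is the vector of the $i$-th and $j$-th partial derivatives, $L_{i,j}(f)$ is a constant with $\|\nabla_{i,j}f(\mathbf{x})-\nabla_{i,j}f(\mathbf{x}+\mathbf{d})\|\le L_{i,j}(f)\|\mathbf{d}\|$ for all $\mathbf{x}$ and all $\mathbf{d}$ with at most two nonzero components, and $L_2(f)=\max_{i\neq j}L_{i,j}(f)$. Greedy sparse-simplex method (all one-dimensional minima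 assumed attained): choose $\mathbf{x}^0\in C_s$. At step $k$: if $\|\mathbf{x}^k\|_0<s$, for each $i$ let $t_i\in\operatorname{argmin}_t f(\mathbf{x}^k+t\mathbf{e}_i)$, $f_i=\min_t f(\mathbf{x}^k+t\mathbf{e}_i)$, $i_k\in\operatorname{argmin}_i f_i$; if $f_{i_k}<f(\mathbf{x}^k)$ set $\mathbf{x}^{k+1}=\mathbf{x}^k+t_{i_k}\mathbf{e}_{i_k}$, else stop. If $\|\mathbf{x}^k\|_0=s$, for $i\in I_1(\mathbf{x}^k)$, $j=1,\dots,n$ let $t_{i,j}\in\operatorname{argmin}_t f(\mathbf{x}^k-x_i^k\mathbf{e}_i+t\mathbf{e}_j)$, $f_{i,j}$ the minimum value, $(i_k,j_k)\in\operatorname{argmin}f_{i,j}$; if $f_{i_k,j_k}<f(\mathbf{x}^k)$ set $\mathbf{x}^{k+1}=\mathbf{x}^k-x^k_{i_k}\mathbf{e}_{i_k}+t_{i_k,j_k}\mathbf{e}_{j_k}$, else stop. *)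

theory Defs
  imports "HOL-Analysis.Analysis" "HOL-Library.Multiset"
begin

definition ebasis :: "'n::finite \<Rightarrow> real^'n" where
  "ebasis i = axis i 1"

definition supp :: "real^'n::finite \<Rightarrow> 'n set" where
  "supp x = {i. x $ i \<noteq> 0}"

definition l0 :: "real^'n::finite \<Rightarrow> nat" where
  "l0 x = card (supp x)"

text \<open>M_s(x): the s-th largest absolute value among the components of x (s \<ge> 1).\<close>
definition Ms :: "nat \<Rightarrow> real^'n::finite \<Rightarrow> real" where
  "Ms s x = rev (sorted_list_of_multiset (image_mset (\<lambda>i. \<bar>x $ i\<bar>) (mset_set UNIV))) ! (s - 1)"

text \<open>One (non-stopping) iteration of the greedy sparse-simplex method:
  x' is an admissible next iterate computed from x.\<close>
definition gss_step :: "(real^'n::finite \<Rightarrow> real) \<Rightarrow> nat \<Rightarrow> real^'n \<Rightarrow> real^'n \<Rightarrow> bool" where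
  "gss_step f s x x' \<longleftrightarrow>
     (l0 x < s \<and>
       (\<exists>i t. x' = x + t *\<^sub>R ebasis i
          \<and> (\<forall>t'. f x' \<le> f (x + t' *\<^sub>R ebasis i))
          \<and> (\<forall>j t'. f x' \<le> f (x + t' *\<^sub>R ebasis j))
          \<and> f x' < f x))
   \<or> (l0 x = s \<and>
       (\<exists>i\<in>supp x. \<exists>j t. x' = x - (x $ i) *\<^sub>R ebasis i + t *\<^sub>R ebasis j
          \<and> (\<forall>t'. f x' \<le> f (x - (x $ i) *\<^sub>R ebasis i + t' *\<^sub>R ebasis j))
          \<and> (\<forall>i'\<in>supp x. \<forall>j' t'. f x' \<le> f (x - (x $ i') *\<^sub>R ebasis i' + t' *\<^sub>R ebasis j'))
          \<and> f x' < f x))"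

end

theory Submission
  imports Defs
begin

lemma Ms_facts:
  fixes X :: "real^'n::finite"
  assumes "0 < s" "s \<le> CARD('n)"
  shows "0 \<le> Ms s X" and "s \<le> l0 X \<Longrightarrow> \<exists>m\<in>supp X. \<bar>X$m\<bar> \<le> Ms s X"
proof -
  define M where "M = image_mset (\<lambda>i. \<bar>X $ i\<bar>) (mset_set (UNIV::'n set))"
  define L where "L = rev (sorted_list_of_multiset M)"
  have MsL: "Ms s X = L ! (s - 1)" unfolding Ms_def L_def M_def by simp
  have mL: "mset L = M" unfolding L_def by simp
  have lenL: "length L = CARD('n)"
    by (metis mL M_def size_image_mset size_mset size_mset_set)
  have sL: "sorted (rev L)" unfolding L_def by simp
  have idx: "s - 1 < length L" using assms lenL by simp
  have "L ! (s-1) \<in> set L" using idx by simp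
  then have "L ! (s-1) \<in># M" using mL by (metis set_mset_mset)
  then show "0 \<le> Ms s X" unfolding MsL M_def by auto
  assume sl: "s \<le> l0 X"
  show "\<exists>m\<in>supp X. \<bar>X$m\<bar> \<le> Ms s X"
  proof (rule ccontr)
    assume "\<not> ?thesis"
    then have big: "\<And>m. m \<in> supp X \<Longrightarrow> Ms s X < \<bar>X$m\<bar>" by force
    define v where "v = Ms s X"
    define P where "P = (\<lambda>a::real. v < a)"
    have "size (filter_mset P M) = card {i. P \<bar>X$i\<bar>}"
      unfolding M_def by (simp add: filter_mset_image_mset filter_mset_mset_set)
    moreover have "supp X \<subseteq> {i. P \<bar>X$i\<bar>}" using big unfolding P_def v_def by auto
    then have "l0 X \<le> card {i. P \<bar>X$i\<bar>}" unfolding l0_def by (simp add: card_mono)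
    ultimately have A: "s \<le> length (filter P L)"
      using sl by (metis mL mset_filter size_mset order_trans)
    have drop0: "filter P (drop (s-1) L) = []"
    proof -
      have "\<forall>a\<in>set (drop (s-1) L). \<not> P a"
      proof
        fix a assume "a \<in> set (drop (s-1) L)"
        then obtain j where j: "j < length (drop (s-1) L)" "a = drop (s-1) L ! j"
          by (metis in_set_conv_nth)
        then have "a = L ! (s - 1 + j)" "s - 1 + j < length L" by auto
        then have "a \<le> L ! (s-1)" using sorted_rev_nth_mono[OF sL, of "s-1" "s-1+j"] by simp
        then show "\<not> P a" unfolding P_def v_def MsL by simp
      qed
      then show ?thesis by (simp add: filter_empty_conv)
    qed
    have "filter P L = filter P (take (s-1) L) @ filter P (drop (s-1) L)"
      by (metis append_take_drop_id filter_append)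
    then have "length (filter P L) \<le> s - 1" using drop0
      by (metis append_Nil2 length_filter_le length_take min.bounded_iff)
    with A assms(1) show False by simp
  qed
qed

lemma ebasis_nth: "ebasis i $ j = (if j = i then 1 else 0)"
  unfolding ebasis_def by (simp add: axis_def)

lemma inner_ebasis: "v \<bullet> ebasis i = v $ i"
  unfolding ebasis_def by (simp add: inner_axis)

lemma fermat_coord:
  fixes f :: "real^'n::finite \<Rightarrow> real"
  assumes grad: "(f has_derivative (\<lambda>h. G \<bullet> h)) (at X)"
    and min: "\<And>t. f X \<le> f (X + t *\<^sub>R ebasis i)"
  shows "G $ i = 0"
proof -
  have d1: "((\<lambda>t::real. X + t *\<^sub>R ebasis i) has_derivative (\<lambda>t. t *\<^sub>R ebasis i)) (at 0)"
    by (auto intro!: derivative_eq_intros)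
  have "((\<lambda>t. f (X + t *\<^sub>R ebasis i)) has_derivative (\<lambda>t. G \<bullet> (t *\<^sub>R ebasis i))) (at 0)"
  proof -
    have "((\<lambda>t. f (X + t *\<^sub>R ebasis i)) has_derivative (\<lambda>t. G \<bullet> (t *\<^sub>R ebasis i))) (at 0)"
      using has_derivative_compose[OF d1, of f "\<lambda>h. G \<bullet> h"] grad by (simp add: o_def)
    then show ?thesis .
  qed
  moreover have "(\<lambda>t. G \<bullet> (t *\<^sub>R ebasis i)) = (*) (G $ i)"
    by (auto simp: inner_ebasis mult.commute)
  ultimately have "((\<lambda>t. f (X + t *\<^sub>R ebasis i)) has_real_derivative G $ i) (at 0)"
    by (simp add: has_field_derivative_def)
  then show ?thesis
    by (rule DERIV_local_min[where d=1]) (use min in auto)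
qed

lemma cs2: "a * p + b * q \<le> sqrt (p^2 + q^2) * sqrt (a^2 + b^2)" for a b p q :: real
proof -
  have "(a*p + b*q)^2 \<le> (p^2+q^2) * (a^2+b^2)"
    using sum_squares_ge_zero[of "a*q - b*p" 0] by (simp add: power2_eq_square algebra_simps)
  then have "\<bar>a*p+b*q\<bar> \<le> sqrt ((p^2+q^2) * (a^2+b^2))"
    using real_le_rsqrt by (metis abs_le_square_iff real_sqrt_abs real_sqrt_le_iff)
  then show ?thesis by (simp add: real_sqrt_mult)
qed

lemma vec2_facts:
  fixes v :: "real^'n::finite" and a b :: real
  assumes "i \<noteq> m"
  defines "d \<equiv> a *\<^sub>R ebasis m + b *\<^sub>R ebasis i"
  shows "v \<bullet> d = a * v$m + b * v$i" and "norm d = sqrt (a^2 + b^2)"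
    and "l0 (c *\<^sub>R d) \<le> 2"
proof -
  show "v \<bullet> d = a * v$m + b * v$i" unfolding d_def
    by (simp add: inner_add_right inner_ebasis mult.commute)
  have "d \<bullet> d = a^2 + b^2" unfolding d_def using assms(1)
    by (simp add: inner_add_right inner_add_left inner_ebasis ebasis_nth power2_eq_square)
  then show "norm d = sqrt (a^2 + b^2)" by (simp add: norm_eq_sqrt_inner)
  have "supp (c *\<^sub>R d) \<subseteq> {m, i}" unfolding supp_def d_def by (auto simp: ebasis_nth)
  then have "card (supp (c *\<^sub>R d)) \<le> card {m, i}" by (simp add: card_mono)
  also have "\<dots> \<le> 2" by (simp add: card_insert_le_m1)
  finally show "l0 (c *\<^sub>R d) \<le> 2" unfolding l0_def .
qed

lemma descent2:
  fixes f :: "real^'n::finite \<Rightarrow> real" and g :: "real^'n \<Rightarrow> real^'n"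
  assumes grad: "\<And>y. (f has_derivative (\<lambda>h. g y \<bullet> h)) (at y)"
    and Lp: "\<And>y d. l0 d \<le> 2 \<Longrightarrow>
        sqrt ((g y $ i - g (y + d) $ i)\<^sup>2 + (g y $ m - g (y + d) $ m)\<^sup>2) \<le> L * norm d"
    and im: "i \<noteq> m"
  shows "f (X + (a *\<^sub>R ebasis m + b *\<^sub>R ebasis i)) \<le> f X + (a * g X $ m + b * g X $ i) + L / 2 * (a^2 + b^2)"
proof -
  define d where "d = a *\<^sub>R ebasis m + b *\<^sub>R ebasis i"
  define q where "q = a^2 + b^2"
  define \<psi> where "\<psi> = (\<lambda>\<tau>. f (X + \<tau> *\<^sub>R d) - \<tau> * (g X \<bullet> d) - L / 2 * \<tau>^2 * q)"
  have "\<psi> 1 \<le> \<psi> 0"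
  proof (rule DERIV_nonpos_imp_nonincreasing[of 0 1])
    fix \<tau> :: real assume t0: "0 \<le> \<tau>" and "\<tau> \<le> 1"
    have d1: "((\<lambda>t::real. X + t *\<^sub>R d) has_derivative (\<lambda>t. t *\<^sub>R d)) (at \<tau>)"
      by (auto intro!: derivative_eq_intros)
    have "((\<lambda>t. f (X + t *\<^sub>R d)) has_derivative (\<lambda>t. g (X + \<tau> *\<^sub>R d) \<bullet> (t *\<^sub>R d))) (at \<tau>)"
      using has_derivative_compose[OF d1, of f "\<lambda>h. g (X + \<tau> *\<^sub>R d) \<bullet> h"] grad by (simp add: o_def)
    moreover have "(\<lambda>t. g (X + \<tau> *\<^sub>R d) \<bullet> (t *\<^sub>R d)) = (*) (g (X + \<tau> *\<^sub>R d) \<bullet> d)"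
      by (auto simp: mult.commute)
    ultimately have D1: "((\<lambda>t. f (X + t *\<^sub>R d)) has_real_derivative (g (X + \<tau> *\<^sub>R d) \<bullet> d)) (at \<tau>)"
      by (simp add: has_field_derivative_def)
    have D: "(\<psi> has_real_derivative (g (X + \<tau> *\<^sub>R d) \<bullet> d - g X \<bullet> d - L * \<tau> * q)) (at \<tau>)"
      unfolding \<psi>_def
      by (rule derivative_eq_intros D1 | simp)+
    define p1 where "p1 = g (X + \<tau> *\<^sub>R d) $ i - g X $ i"
    define p2 where "p2 = g (X + \<tau> *\<^sub>R d) $ m - g X $ m"
    have "g (X + \<tau> *\<^sub>R d) \<bullet> d - g X \<bullet> d = a * p2 + b * p1"
      unfolding d_def vec2_facts[OF im] p1_def p2_def by (simp add: algebra_simps)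
    also have "\<dots> \<le> sqrt (p1^2 + p2^2) * sqrt q" unfolding q_def
      using cs2[of a p2 b p1] by (simp add: add.commute)
    also have "sqrt (p1^2 + p2^2) \<le> L * norm (\<tau> *\<^sub>R d)"
      using Lp[of "\<tau> *\<^sub>R d" X] vec2_facts(3)[OF im, of \<tau> a b] unfolding p1_def p2_def d_def
      by (simp add: power2_commute)
    then have "sqrt (p1^2 + p2^2) * sqrt q \<le> L * norm (\<tau> *\<^sub>R d) * sqrt q"
      by (rule mult_right_mono) (simp add: q_def)
    also have "L * norm (\<tau> *\<^sub>R d) * sqrt q = L * \<tau> * q"
      using t0 vec2_facts(2)[OF im, of a b] unfolding d_def q_def
      by simp
    finally show "\<exists>y. (\<psi> has_real_derivative y) (at \<tau>) \<and> y \<le> 0"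
      using D by (intro exI[of _ "g (X + \<tau> *\<^sub>R d) \<bullet> d - g X \<bullet> d - L * \<tau> * q"]) simp
  qed simp
  then show ?thesis unfolding \<psi>_def d_def q_def vec2_facts(1)[OF im] by simp
qed

lemma key_bound:
  fixes f :: "real^'n::finite \<Rightarrow> real" and g :: "real^'n \<Rightarrow> real^'n"
  assumes grad: "\<And>y. (f has_derivative (\<lambda>h. g y \<bullet> h)) (at y)"
    and Lp: "\<And>y d. l0 d \<le> 2 \<Longrightarrow>
        sqrt ((g y $ i - g (y + d) $ i)\<^sup>2 + (g y $ m - g (y + d) $ m)\<^sup>2) \<le> L * norm d"
    and im: "i \<noteq> m" and L0: "0 \<le> L" and gm: "g X $ m = 0"
    and min: "\<And>t. f X \<le> f (X - (X $ m) *\<^sub>R ebasis m + t *\<^sub>R ebasis i)"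
  shows "\<bar>g X $ i\<bar> \<le> L * \<bar>X $ m\<bar>"
proof -
  define G where "G = g X $ i"
  define c where "c = X $ m"
  have ineq: "0 \<le> t * G + L / 2 * (c^2 + t^2)" for t
  proof -
    have eq: "X - (X $ m) *\<^sub>R ebasis m + t *\<^sub>R ebasis i = X + ((- c) *\<^sub>R ebasis m + t *\<^sub>R ebasis i)"
      unfolding c_def by (simp add: algebra_simps)
    have "f X \<le> f (X + ((- c) *\<^sub>R ebasis m + t *\<^sub>R ebasis i))" using min[of t] unfolding eq .
    also have "\<dots> \<le> f X + (- c * g X $ m + t * g X $ i) + L / 2 * ((- c)^2 + t^2)"
      by (rule descent2[OF grad Lp im])
    finally show ?thesis using gm unfolding G_def by simp
  qed
  show ?thesis
  proof (cases "L = 0")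
    case True
    then have "0 \<le> - G * G" using ineq[of "- G"] by simp
    then have "G * G = 0" using zero_le_square[of G] by linarith
    then have "G = 0" by simp
    then show ?thesis using True unfolding G_def by simp
  next
    case False
    then have Lp': "0 < L" using L0 by simp
    have h0: "0 \<le> (- G / L) * G + L / 2 * (c^2 + (- G / L)^2)" by (rule ineq)
    have e1: "2*L*((- G / L) * G) = -2 * G^2" using Lp' by (simp add: power2_eq_square)
    have e2: "2*L*(L / 2 * (c^2 + (- G / L)^2)) = L^2*c^2 + G^2" using Lp'
      by (simp add: power2_eq_square distrib_left)
    have e3: "2*L*((- G / L) * G + L / 2 * (c^2 + (- G / L)^2)) = 2*L*((- G / L) * G) + 2*L*(L / 2 * (c^2 + (- G / L)^2))"
      by (simp only: distrib_left)
    have e: "2*L*((- G / L) * G + L / 2 * (c^2 + (- G / L)^2)) = L^2*c^2 - G^2"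
      using e1 e2 e3 by linarith
    have "0 \<le> 2*L*((- G / L) * G + L / 2 * (c^2 + (- G / L)^2))" using h0 Lp' by simp
    then have "G^2 \<le> (L * \<bar>c\<bar>)^2" unfolding e by (simp add: power_mult_distrib)
    then have h: "\<bar>G\<bar>^2 \<le> (L * \<bar>c\<bar>)^2" by (simp only: power2_abs)
    have h2: "0 \<le> L * \<bar>c\<bar>" using Lp' by simp
    have "\<bar>G\<bar> \<le> L * \<bar>c\<bar>" using power2_le_imp_le[OF h h2] .
    then show ?thesis unfolding G_def c_def .
  qed
qed

lemma supp_iff: "i \<in> supp v \<longleftrightarrow> v $ i \<noteq> 0"
  unfolding supp_def by simp

lemma lim_le:
  fixes f F :: "real^'n::finite \<Rightarrow> real"
  assumes dec: "\<And>k. f (x (Suc k)) < f (x k)"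
    and r: "strict_mono r" and conv: "(x \<circ> r) \<longlonglongrightarrow> X"
    and cf: "isCont f X" and cF: "isCont F X"
    and freq: "frequently (\<lambda>k. f (x (Suc (r k))) \<le> F (x (r k))) sequentially"
  shows "f X \<le> F X"
proof (rule ccontr)
  assume "\<not> ?thesis"
  then have lt: "F X < f X" by simp
  have fx: "(\<lambda>k. f (x (r k))) \<longlonglongrightarrow> f X" using isCont_tendsto_compose[OF cf conv] by (simp add: o_def)
  have Fx: "(\<lambda>k. F (x (r k))) \<longlonglongrightarrow> F X" using isCont_tendsto_compose[OF cF conv] by (simp add: o_def)
  have decs: "decseq (\<lambda>k. f (x k))" using dec by (simp add: decseq_Suc_iff less_imp_le)
  have lb: "f X \<le> f (x j)" for j
  proof -
    have "eventually (\<lambda>k. f (x (r k)) \<le> f (x j)) sequentially"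
    proof (rule eventually_sequentiallyI[of j])
      fix k assume "j \<le> k"
      then have "j \<le> r k" using seq_suble[OF r, of k] by simp
      then show "f (x (r k)) \<le> f (x j)" using decseqD[OF decs] by blast
    qed
    then show ?thesis using tendsto_upperbound[OF fx] by simp
  qed
  have "eventually (\<lambda>k. F (x (r k)) < f X) sequentially" using order_tendstoD(2)[OF Fx lt] .
  from frequently_eventually_conj[OF freq this]
  have "frequently (\<lambda>k. False) sequentially"
  proof (rule frequently_elim1)
    fix k assume "F (x (r k)) < f X \<and> f (x (Suc (r k))) \<le> F (x (r k))"
    then show False using lb[of "Suc (r k)"] by simp
  qed
  then show False by simp
qed

theorem corollary3p2:
  fixes f :: "real^'n \<Rightarrow> real"
    and g :: "real^'n \<Rightarrow> real^'n"
    and Lij :: "'n \<Rightarrow> 'n \<Rightarrow> real"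
    and s :: nat
    and x :: "nat \<Rightarrow> real^'n"
    and xstar :: "real^'n"
  assumes grad: "\<And>y. (f has_derivative (\<lambda>h. g y \<bullet> h)) (at y)"
    and grad_cont: "continuous_on UNIV g"
    and grad_lip: "\<exists>L. L-lipschitz_on UNIV g"
    and bdd: "bdd_below (range f)"
    and s_pos: "0 < s" and s_lt: "s < CARD('n)"
    and attained: "\<And>y i. \<exists>t. \<forall>t'. f (y + t *\<^sub>R ebasis i) \<le> f (y + t' *\<^sub>R ebasis i)"
    and Lij_prop: "\<And>i j y d. i \<noteq> j \<Longrightarrow> l0 d \<le> 2 \<Longrightarrow>
        sqrt ((g y $ i - g (y + d) $ i)\<^sup>2 + (g y $ j - g (y + d) $ j)\<^sup>2) \<le> Lij i j * norm d"
    and x0: "l0 (x 0) \<le> s"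
    and steps: "\<And>k. gss_step f s (x k) (x (Suc k))"
    and acc: "\<exists>r. strict_mono r \<and> (x \<circ> r) \<longlonglongrightarrow> xstar"
  shows "(\<forall>i\<in>supp xstar. g xstar $ i = 0) \<and>
         (\<forall>i. i \<notin> supp xstar \<longrightarrow>
            \<bar>g xstar $ i\<bar> \<le> Max {Lij i' j' | i' j'. i' \<noteq> j'} * Ms s xstar)"
proof -
  obtain r where r: "strict_mono r" and conv: "(x \<circ> r) \<longlonglongrightarrow> xstar" using acc by blast
  have cf: "\<And>y. isCont f y" using grad has_derivative_continuous by blast
  have stepk: "gss_step f s (x k) (x (Suc k))" for k by (rule steps)
  have dec: "\<And>k. f (x (Suc k)) < f (x k)"
    using stepk unfolding gss_step_def by blast
  have l0le: "l0 (x k) \<le> s" for k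
  proof -
    have "l0 (x k) < s \<or> l0 (x k) = s" using stepk[of k] unfolding gss_step_def by blast
    then show ?thesis by linarith
  qed
  have S_lt: "f (x (Suc k)) \<le> f (x k + t *\<^sub>R ebasis j)" if "l0 (x k) < s" for k j t
    using stepk[of k] that unfolding gss_step_def by force
  have S_eq: "f (x (Suc k)) \<le> f (x k - (x k $ m) *\<^sub>R ebasis m + t *\<^sub>R ebasis j)"
    if "l0 (x k) = s" "m \<in> supp (x k)" for k m j t
    using stepk[of k] that unfolding gss_step_def by force
  have S_own: "f (x (Suc k)) \<le> f (x k + t *\<^sub>R ebasis m)" if "m \<in> supp (x k)" for k m t
  proof (cases "l0 (x k) < s")
    case True then show ?thesis by (rule S_lt)
  next
    case False
    then have "l0 (x k) = s" using l0le[of k] by simp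
    from S_eq[OF this that, where j=m and t="t + x k $ m"]
    show ?thesis by (simp add: algebra_simps)
  qed
  have contF1: "isCont (\<lambda>y. f (y + t *\<^sub>R ebasis i)) X" for t i X
    by (rule isCont_o2[OF _ cf]) (intro continuous_intros)
  have contF2: "isCont (\<lambda>y. f (y - (y $ m) *\<^sub>R ebasis m + t *\<^sub>R ebasis i)) X" for t i m X
    by (rule isCont_o2[OF _ cf]) (intro continuous_intros)
  have ev_supp: "eventually (\<lambda>k. m \<in> supp (x (r k))) sequentially" if "m \<in> supp xstar" for m
  proof -
    have "(\<lambda>k. x (r k) $ m) \<longlonglongrightarrow> xstar $ m"
      using tendsto_vec_nth[OF conv, of m] by (simp add: o_def)
    from tendsto_imp_eventually_ne[OF this, of 0] that
    show ?thesis by (simp add: supp_iff)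
  qed
  have part1: "g xstar $ i = 0" if "i \<in> supp xstar" for i
  proof (rule fermat_coord[OF grad])
    fix t
    have "eventually (\<lambda>k. f (x (Suc (r k))) \<le> f (x (r k) + t *\<^sub>R ebasis i)) sequentially"
      using ev_supp[OF that] by (rule eventually_mono) (rule S_own)
    then have "frequently (\<lambda>k. f (x (Suc (r k))) \<le> f (x (r k) + t *\<^sub>R ebasis i)) sequentially"
      by (rule eventually_frequently[rotated]) simp
    then show "f xstar \<le> f (xstar + t *\<^sub>R ebasis i)"
      by (rule lim_le[OF dec r conv cf contF1])
  qed
  have Lnn: "0 \<le> Lij i j" if "i \<noteq> j" for i j
  proof -
    have "0 \<le> sqrt ((g xstar $ i - g (xstar + (0 *\<^sub>R ebasis j + 1 *\<^sub>R ebasis i)) $ i)\<^sup>2 +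
       (g xstar $ j - g (xstar + (0 *\<^sub>R ebasis j + 1 *\<^sub>R ebasis i)) $ j)\<^sup>2)" by simp
    also have "\<dots> \<le> Lij i j * norm (0 *\<^sub>R ebasis j + 1 *\<^sub>R ebasis i)"
      by (rule Lij_prop[OF that, where y=xstar and d="0 *\<^sub>R ebasis j + 1 *\<^sub>R ebasis i"])
         (use vec2_facts(3)[OF that, of 1 0 1] in simp)
    also have "\<dots> = Lij i j" using vec2_facts(2)[OF that, of 0 1] by simp
    finally show ?thesis .
  qed
  define Mx where "Mx = Max {Lij i' j' | i' j'. i' \<noteq> j'}"
  have finL: "finite {Lij i' j' | i' j'. i' \<noteq> j'}"
  proof -
    have "{Lij i' j' | i' j'. i' \<noteq> j'} \<subseteq> (\<lambda>(a, b). Lij a b) ` UNIV" by auto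
    then show ?thesis by (rule finite_subset) simp
  qed
  have Mx_ge: "Lij i j \<le> Mx" if "i \<noteq> j" for i j
    unfolding Mx_def by (rule Max_ge[OF finL]) (use that in blast)
  have sCard: "s \<le> CARD('n)" using s_lt by simp
  have Ms0: "0 \<le> Ms s xstar" by (rule Ms_facts(1)[OF s_pos sCard])
  have part2: "\<bar>g xstar $ i\<bar> \<le> Mx * Ms s xstar" if iX: "i \<notin> supp xstar" for i
  proof -
    have "\<exists>j. j \<noteq> i"
    proof (rule ccontr)
      assume "\<not> ?thesis"
      then have "UNIV = {i}" by auto
      then have "card (UNIV::'n set) = card {i}" by (rule arg_cong)
      then have "CARD('n) = 1" by simp
      then show False using s_pos s_lt by simp
    qed
    then obtain j where "j \<noteq> i" by blast
    then have Mx0: "0 \<le> Mx" using Lnn[of j i] Mx_ge[of j i] by simp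
    have claim: "(\<forall>t. f xstar \<le> f (xstar + t *\<^sub>R ebasis i)) \<or>
      (\<exists>m\<in>supp xstar. \<bar>xstar $ m\<bar> \<le> Ms s xstar \<and>
          (\<forall>t. f xstar \<le> f (xstar - (xstar $ m) *\<^sub>R ebasis m + t *\<^sub>R ebasis i)))"
    proof (cases "frequently (\<lambda>k. l0 (x (r k)) < s) sequentially")
      case True
      have "f xstar \<le> f (xstar + t *\<^sub>R ebasis i)" for t
      proof (rule lim_le[OF dec r conv cf contF1])
        show "frequently (\<lambda>k. f (x (Suc (r k))) \<le> f (x (r k) + t *\<^sub>R ebasis i)) sequentially"
          using True by (rule frequently_elim1) (rule S_lt)
      qed
      then show ?thesis by blast
    next
      case False
      then have evs: "eventually (\<lambda>k. l0 (x (r k)) = s) sequentially"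
        unfolding not_frequently
        by (rule eventually_mono) (use l0le in \<open>meson le_less\<close>)
      show ?thesis
      proof (cases "l0 xstar < s")
        case True
        have "eventually (\<lambda>k. \<exists>m\<in>UNIV. m \<in> supp (x (r k)) \<and> m \<notin> supp xstar \<and> l0 (x (r k)) = s) sequentially"
        proof (rule eventually_mono[OF evs])
          fix k assume k: "l0 (x (r k)) = s"
          show "\<exists>m\<in>UNIV. m \<in> supp (x (r k)) \<and> m \<notin> supp xstar \<and> l0 (x (r k)) = s"
          proof (rule ccontr)
            assume "\<not> ?thesis"
            then have "supp (x (r k)) \<subseteq> supp xstar" using k by auto
            then have "l0 (x (r k)) \<le> l0 xstar" unfolding l0_def by (simp add: card_mono)
            then show False using k True by simp
          qed
        qed
        then have "frequently (\<lambda>k. \<exists>m\<in>UNIV. m \<in> supp (x (r k)) \<and> m \<notin> supp xstar \<and> l0 (x (r k)) = s) sequentially"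
          by (rule eventually_frequently[rotated]) simp
        then obtain m where fm: "frequently (\<lambda>k. m \<in> supp (x (r k)) \<and> m \<notin> supp xstar \<and> l0 (x (r k)) = s) sequentially"
          by (subst (asm) eventually_frequently_simps(13)) auto
        have "frequently (\<lambda>k. m \<notin> supp xstar) sequentially"
          using fm by (rule frequently_elim1) simp
        then have mX: "xstar $ m = 0" by (simp add: supp_iff)
        have "f xstar \<le> f (xstar + t *\<^sub>R ebasis i)" for t
        proof -
          have "f xstar \<le> f (xstar - (xstar $ m) *\<^sub>R ebasis m + t *\<^sub>R ebasis i)"
          proof (rule lim_le[OF dec r conv cf contF2])
            show "frequently (\<lambda>k. f (x (Suc (r k))) \<le> f (x (r k) - (x (r k) $ m) *\<^sub>R ebasis m + t *\<^sub>R ebasis i)) sequentially"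
              using fm by (rule frequently_elim1) (intro S_eq; simp)
          qed
          then show ?thesis using mX by simp
        qed
        then show ?thesis by blast
      next
        case False
        then have "s \<le> l0 xstar" by simp
        from Ms_facts(2)[OF s_pos sCard this] obtain m where
          m: "m \<in> supp xstar" "\<bar>xstar $ m\<bar> \<le> Ms s xstar" by blast
        have "f xstar \<le> f (xstar - (xstar $ m) *\<^sub>R ebasis m + t *\<^sub>R ebasis i)" for t
        proof (rule lim_le[OF dec r conv cf contF2])
          have "eventually (\<lambda>k. l0 (x (r k)) = s \<and> m \<in> supp (x (r k))) sequentially"
            using evs ev_supp[OF m(1)] by (rule eventually_conj)
          then have "frequently (\<lambda>k. l0 (x (r k)) = s \<and> m \<in> supp (x (r k))) sequentially"
            by (rule eventually_frequently[rotated]) simp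
          then show "frequently (\<lambda>k. f (x (Suc (r k))) \<le> f (x (r k) - (x (r k) $ m) *\<^sub>R ebasis m + t *\<^sub>R ebasis i)) sequentially"
            by (rule frequently_elim1) (intro S_eq; simp)
        qed
        then show ?thesis using m by blast
      qed
    qed
    then show ?thesis
    proof
      assume "\<forall>t. f xstar \<le> f (xstar + t *\<^sub>R ebasis i)"
      then have "g xstar $ i = 0" by (intro fermat_coord[OF grad]) blast
      then show ?thesis using Mx0 Ms0 by simp
    next
      assume "\<exists>m\<in>supp xstar. \<bar>xstar $ m\<bar> \<le> Ms s xstar \<and>
          (\<forall>t. f xstar \<le> f (xstar - (xstar $ m) *\<^sub>R ebasis m + t *\<^sub>R ebasis i))"
      then obtain m where m: "m \<in> supp xstar" "\<bar>xstar $ m\<bar> \<le> Ms s xstar"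
        "\<And>t. f xstar \<le> f (xstar - (xstar $ m) *\<^sub>R ebasis m + t *\<^sub>R ebasis i)" by blast
      have im: "i \<noteq> m" using m(1) iX by blast
      have "\<bar>g xstar $ i\<bar> \<le> Lij i m * \<bar>xstar $ m\<bar>"
        by (rule key_bound[OF grad Lij_prop[OF im] im Lnn[OF im] part1[OF m(1)] m(3)])
      also have "\<dots> \<le> Mx * \<bar>xstar $ m\<bar>" by (rule mult_right_mono[OF Mx_ge[OF im]]) simp
      also have "\<dots> \<le> Mx * Ms s xstar" by (rule mult_left_mono[OF m(2) Mx0])
      finally show ?thesis .
    qed
  qed
  show ?thesis using part1 part2 unfolding Mx_def by blast
qed

end
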